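(* Let $p,\tilde{p} \in [0,1]$ and let $\mathbf{x} = (x_1,x_2,u)$ and $\tilde{\mathbf{x}} = (\tilde{x}_1,\tilde{x}_2,\tilde{u})$ be arbitrary configurations of $n$ agents. Then for all $t \geq 0$: (1) if $\tilde{p} \leq p$, $\tilde{x}_1 \leq x_1$ and $\tilde{x}_2 \geq x_2$, then $\Pr[T_1(p,\mathbf{x}) \leq t] \geq \Pr[T_1(\tilde{p},\tilde{\mathbf{x}}) \leq t]$; (2) if $\tilde{p} \geq p$, $\tilde{x}_1 \geq x_1$ and $\tilde{x}_2 \leq x_2$, then $\Pr[T_2(p,\mathbf{x}) \leq t] \geq \Pr[T_2(\tilde{p},\tilde{\mathbf{x}}) \leq t]$.
   Context: Population protocol with $n$ agents, each in a state from $Q=\{1,2,\bot\}$ (Opinion 1, Opinion 2, undecided). At each time step a scheduler picks an ordered pair $(i,j)$ of agents uniformly at random, independently of the past; $i$ is the initiator and $j$ the responder, and only the initiator changes state. The stubborn undecided state dynamics $\mathrm{USD}_p$ with stubbornness $p\in[0,1]$ has transitions: if the initiator is in state $2$ and the responder in state $1$, the initiator becomes $\bot$; if the initiator is in state $1$ and the responder in state $2$, the initiator becomes $\bot$ with probability $1-p$ and stays $1$ with probability $p$; if the initiator is $\bot$, it adopts the responder's state; otherwise nothing changes. A configuration $(x_1,x_2,u)$ gives the numbers of agents in states $1$, $2$, $\bot$ (summing to $n$). $\mathrm{USD}_p(\mathbf{x})$ is the process started in $\mathbf{x}$, time measured in interactions, and $T_i(p,\mathbf{x})$ is the first time at which all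 $n$ agents have Opinion $i$ in $\mathrm{USD}_p(\mathbf{x})$ ($\infty$ if never). *)

theory Defs
  imports "HOL-Probability.Probability"
begin

datatype st = Op1 | Op2 | Und

text \<open>A configuration (x1, x2, u): numbers of agents in states 1, 2, undecided.\<close>
type_synonym config = "nat \<times> nat \<times> nat"

definition nagents :: "config \<Rightarrow> nat" where
  "nagents c = (case c of (x1, x2, u) \<Rightarrow> x1 + x2 + u)"

text \<open>A canonical labelling of the agents 0..n-1 realising the configuration
  (the dynamics only depends on the counts).\<close>
definition state_of :: "config \<Rightarrow> nat \<Rightarrow> st" where
  "state_of c k = (case c of (x1, x2, u) \<Rightarrow>
     if k < x1 then Op1 else if k < x1 + x2 then Op2 else Und)"

text \<open>New state of the initiator (in state a) after interacting with a
  responder in state b, for USD with stubbornness p.\<close>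
definition interact :: "real \<Rightarrow> st \<Rightarrow> st \<Rightarrow> st pmf" where
  "interact p a b =
     (if a = Op2 \<and> b = Op1 then return_pmf Und
      else if a = Op1 \<and> b = Op2 then map_pmf (\<lambda>keep. if keep then Op1 else Und) (bernoulli_pmf p)
      else if a = Und then return_pmf b
      else return_pmf a)"

definition cnt_add :: "config \<Rightarrow> st \<Rightarrow> int \<Rightarrow> config" where
  "cnt_add c s d = (case c of (x1, x2, u) \<Rightarrow>
     (case s of Op1 \<Rightarrow> (nat (int x1 + d), x2, u)
              | Op2 \<Rightarrow> (x1, nat (int x2 + d), u)
              | Und \<Rightarrow> (x1, x2, nat (int u + d))))"

definition move :: "config \<Rightarrow> st \<Rightarrow> st \<Rightarrow> config" where
  "move c a a' = cnt_add (cnt_add c a (-1)) a' 1"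

definition step :: "real \<Rightarrow> config \<Rightarrow> config pmf" where
  "step p c =
     (if nagents c < 2 then return_pmf c
      else do {
        (i, j) \<leftarrow> pmf_of_set {(i, j). i < nagents c \<and> j < nagents c \<and> i \<noteq> j};
        a' \<leftarrow> interact p (state_of c i) (state_of c j);
        return_pmf (move c (state_of c i) a')
      })"

fun traj :: "real \<Rightarrow> config \<Rightarrow> nat \<Rightarrow> config list pmf" where
  "traj p c 0 = return_pmf [c]"
| "traj p c (Suc t) = traj p c t \<bind> (\<lambda>xs. map_pmf (\<lambda>y. xs @ [y]) (step p (last xs)))"

definition consensus :: "nat \<Rightarrow> nat \<Rightarrow> config" where
  "consensus i n = (if i = 1 then (n, 0, 0) else (0, n, 0))"

definition prob_T_le :: "nat \<Rightarrow> real \<Rightarrow> config \<Rightarrow> nat \<Rightarrow> real" where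
  "prob_T_le i p c t =
     measure_pmf.prob (traj p c t) {xs. \<exists>k\<le>t. xs ! k = consensus i (nagents c)}"

end

theory Submission
  imports Defs
begin

lemma prob_bind_pmf:
  "measure_pmf.prob (bind_pmf M f) A = (\<integral>x. measure_pmf.prob (f x) A \<partial>M)"
proof -
  have int: "integrable (measure_pmf M) (\<lambda>x. measure_pmf.prob (f x) A)"
    by (rule measure_pmf.integrable_const_bound[where B=1]) auto
  have "ennreal (measure_pmf.prob (bind_pmf M f) A) = emeasure (bind_pmf M f) A"
    by (simp add: measure_pmf.emeasure_eq_measure)
  also have "\<dots> = (\<integral>\<^sup>+x. emeasure (f x) A \<partial>M)" by simp
  also have "\<dots> = (\<integral>\<^sup>+x. ennreal (measure_pmf.prob (f x) A) \<partial>M)"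
    by (simp add: measure_pmf.emeasure_eq_measure)
  also have "\<dots> = ennreal (\<integral>x. measure_pmf.prob (f x) A \<partial>M)"
    by (rule nn_integral_eq_integral[OF int]) auto
  finally show ?thesis by (simp add: integral_nonneg_AE)
qed

lemma traj_set: "xs \<in> set_pmf (traj p c t) \<Longrightarrow> length xs = Suc t \<and> hd xs = c"
proof (induction t arbitrary: xs)
  case (Suc t)
  then obtain ys y where "ys \<in> set_pmf (traj p c t)" "xs = ys @ [y]" by auto
  with Suc.IH[of ys] show ?case by (cases ys) auto
qed simp

lemma traj_Suc': "traj p c (Suc t) = step p c \<bind> (\<lambda>y. map_pmf ((#) c) (traj p y t))"
proof (induction t arbitrary: c)
  case 0
  then show ?case by (simp add: map_pmf_def bind_return_pmf)
next
  case (Suc t)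
  have "traj p c (Suc (Suc t)) = traj p c (Suc t) \<bind> (\<lambda>xs. map_pmf (\<lambda>y. xs @ [y]) (step p (last xs)))"
    by (rule traj.simps(2))
  also have "\<dots> = step p c \<bind> (\<lambda>y. map_pmf ((#) c) (traj p y t) \<bind> (\<lambda>xs. map_pmf (\<lambda>z. xs @ [z]) (step p (last xs))))"
    by (simp only: Suc bind_assoc_pmf)
  also have "\<dots> = step p c \<bind> (\<lambda>y. map_pmf ((#) c) (traj p y (Suc t)))"
  proof (rule bind_pmf_cong[OF refl])
    fix y
    have "map_pmf ((#) c) (traj p y t) \<bind> (\<lambda>xs. map_pmf (\<lambda>z. xs @ [z]) (step p (last xs)))
        = traj p y t \<bind> (\<lambda>ys. map_pmf (\<lambda>z. c # ys @ [z]) (step p (last ys)))"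
      apply (simp add: map_pmf_def bind_assoc_pmf bind_return_pmf)
      apply (rule bind_pmf_cong[OF refl])
      subgoal for ys using traj_set[of ys p y t] by (cases ys) (auto simp: bind_return_pmf)
      done
    also have "\<dots> = map_pmf ((#) c) (traj p y (Suc t))"
      by (simp add: map_pmf_def bind_assoc_pmf bind_return_pmf)
    finally show "map_pmf ((#) c) (traj p y t) \<bind> (\<lambda>xs. map_pmf (\<lambda>z. xs @ [z]) (step p (last xs)))
        = map_pmf ((#) c) (traj p y (Suc t))" .
  qed
  finally show ?case .
qed

definition P :: "nat \<Rightarrow> real \<Rightarrow> nat \<Rightarrow> config \<Rightarrow> nat \<Rightarrow> real" where
  "P i p n c t = measure_pmf.prob (traj p c t) {xs. \<exists>k\<le>t. xs ! k = consensus i n}"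

lemma P_0: "P i p n c 0 = (if c = consensus i n then 1 else 0)"
  by (simp add: P_def)

lemma P_Suc: "P i p n c (Suc t) =
   (if c = consensus i n then 1 else \<integral>y. P i p n y t \<partial>step p c)"
proof -
  have "P i p n c (Suc t) = (\<integral>y. measure_pmf.prob (traj p y t) {ys. c # ys \<in> {xs. \<exists>k\<le>Suc t. xs ! k = consensus i n}} \<partial>step p c)"
    by (simp add: P_def traj_Suc' prob_bind_pmf del: traj.simps)
  also have "\<dots> = (if c = consensus i n then 1 else \<integral>y. P i p n y t \<partial>step p c)"
  proof (cases "c = consensus i n")
    case True
    then have "\<And>ys. c # ys \<in> {xs. \<exists>k\<le>Suc t. xs ! k = consensus i n}" by force
    then show ?thesis using True by simp
  next
    case False
    have "{ys. c # ys \<in> {xs. \<exists>k\<le>Suc t. xs ! k = consensus i n}} = {xs. \<exists>k\<le>t. xs ! k = consensus i n}"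
    proof (intro set_eqI iffI; simp)
      fix ys assume "\<exists>k\<le>Suc t. (c # ys) ! k = consensus i n"
      then obtain k where "k \<le> Suc t" "(c # ys) ! k = consensus i n" by blast
      with False show "\<exists>k\<le>t. ys ! k = consensus i n" by (cases k) auto
    next
      fix ys assume "\<exists>k\<le>t. ys ! k = consensus i n"
      then obtain k where "k \<le> t" "ys ! k = consensus i n" by blast
      then show "\<exists>k\<le>Suc t. (c # ys) ! k = consensus i n" by (intro exI[of _ "Suc k"]) auto
    qed
    then show ?thesis using False by (simp add: P_def)
  qed
  finally show ?thesis .
qed


lemma nat_m1: "nat (int a + - 1) = a - 1" by linarith
lemma nat_p1: "nat (int a + 1) = a + 1" by linarith

lemma move_simps:
  "move (a,b,u) Op1 Op1 = (a-1+1,b,u)" "move (a,b,u) Op1 Op2 = (a-1,b+1,u)" "move (a,b,u) Op1 Und = (a-1,b,u+1)"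
  "move (a,b,u) Op2 Op1 = (a+1,b-1,u)" "move (a,b,u) Op2 Op2 = (a,b-1+1,u)" "move (a,b,u) Op2 Und = (a,b-1,u+1)"
  "move (a,b,u) Und Op1 = (a+1,b,u-1)" "move (a,b,u) Und Op2 = (a,b+1,u-1)" "move (a,b,u) Und Und = (a,b,u-1+1)"
  by (simp_all add: move_def cnt_add_def nat_m1 nat_p1 del: One_nat_def)

lemma sum_state:
  fixes \<phi> :: "st \<Rightarrow> real"
  shows "(\<Sum>k<a+b+u. \<phi> (state_of (a,b,u) k)) = real a * \<phi> Op1 + real b * \<phi> Op2 + real u * \<phi> Und"
proof -
  have "(\<Sum>k<a+b+u. \<phi> (state_of (a,b,u) k)) = (\<Sum>k\<in>{0..<a}. \<phi> (state_of (a,b,u) k))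
      + (\<Sum>k\<in>{a..<a+b}. \<phi> (state_of (a,b,u) k)) + (\<Sum>k\<in>{a+b..<a+b+u}. \<phi> (state_of (a,b,u) k))"
    by (simp add: sum.atLeastLessThan_concat lessThan_atLeast0)
  also have "(\<Sum>k\<in>{0..<a}. \<phi> (state_of (a,b,u) k)) = (\<Sum>k\<in>{0..<a}. \<phi> Op1)"
    by (rule sum.cong) (auto simp: state_of_def)
  also have "(\<Sum>k\<in>{a..<a+b}. \<phi> (state_of (a,b,u) k)) = (\<Sum>k\<in>{a..<a+b}. \<phi> Op2)"
    by (rule sum.cong) (auto simp: state_of_def)
  also have "(\<Sum>k\<in>{a+b..<a+b+u}. \<phi> (state_of (a,b,u) k)) = (\<Sum>k\<in>{a+b..<a+b+u}. \<phi> Und)"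
    by (rule sum.cong) (auto simp: state_of_def)
  finally show ?thesis by simp
qed

lemma sum_pairs:
  fixes F :: "nat \<times> nat \<Rightarrow> real"
  shows "(\<Sum>x\<in>{(i, j). i < n \<and> j < n \<and> i \<noteq> j}. F x) = (\<Sum>i<n. (\<Sum>j<n. F (i,j)) - F (i,i))"
proof -
  have "{(i, j). i < n \<and> j < n \<and> i \<noteq> j} = Sigma {..<n} (\<lambda>i. {..<n} - {i})" by auto
  then have "(\<Sum>x\<in>{(i, j). i < n \<and> j < n \<and> i \<noteq> j}. F x) = (\<Sum>i<n. \<Sum>j\<in>{..<n} - {i}. F (i,j))"
    by (simp add: sum.Sigma)
  also have "\<dots> = (\<Sum>i<n. (\<Sum>j<n. F (i,j)) - F (i,i))"
    by (rule sum.cong[OF refl]) (simp add: sum_diff1)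
  finally show ?thesis .
qed


definition Ef :: "real \<Rightarrow> (config \<Rightarrow> real) \<Rightarrow> nat \<Rightarrow> nat \<Rightarrow> nat \<Rightarrow> real" where
  "Ef p g a b u =
     real a * (real a - 1) * g (a,b,u) + real a * real b * (p * g (a,b,u) + (1 - p) * g (a-1,b,u+1))
   + real a * real u * g (a,b,u) + real b * real a * g (a,b-1,u+1) + real b * (real b - 1) * g (a,b,u)
   + real b * real u * g (a,b,u) + real u * real a * g (a+1,b,u-1) + real u * real b * g (a,b+1,u-1)
   + real u * (real u - 1) * g (a,b,u)"

lemma step_formula:
  assumes n2: "a+b+u \<ge> 2" and p: "0 \<le> p" "p \<le> 1"
  shows "(\<integral>y. g y \<partial>step p (a,b,u)) = Ef p g a b u / (real (a+b+u) * (real (a+b+u) - 1))"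
proof -
  define c where "c = (a,b,u)"
  define n where "n = a+b+u"
  define s where "s = state_of c"
  define S where "S = {(i, j). i < n \<and> j < n \<and> i \<noteq> j}"
  have nc: "nagents c = n" by (simp add: c_def n_def nagents_def)
  have st: "step p c = pmf_of_set S \<bind> (\<lambda>(i,j). map_pmf (move c (s i)) (interact p (s i) (s j)))"
    using n2 by (simp add: step_def nc S_def s_def n_def map_pmf_def)
  have Sfin: "finite S" by (rule finite_subset[of _ "{..<n} \<times> {..<n}"]) (auto simp: S_def)
  have "(0,1) \<in> S" using n2 by (auto simp: S_def n_def)
  then have Sne: "S \<noteq> {}" by blast
  have fin_int: "finite (set_pmf (interact p x y))" for x y
    by (simp add: interact_def)
  define h where "h x y = (\<integral>z. g z \<partial>map_pmf (move c x) (interact p x y))" for x y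
  have "(\<integral>y. g y \<partial>step p c) = (\<Sum>x\<in>S. h (s (fst x)) (s (snd x)) / real (card S))"
    unfolding st
    by (subst pmf_expectation_bind_pmf_of_set[OF Sne Sfin])
       (auto simp: fin_int h_def divide_inverse split: prod.splits intro!: sum.cong)
  also have "\<dots> = (\<Sum>x\<in>S. h (s (fst x)) (s (snd x))) / real (card S)"
    by (simp add: sum_divide_distrib)
  also have "(\<Sum>x\<in>S. h (s (fst x)) (s (snd x))) =
     (\<Sum>i<n. (\<Sum>j<n. h (s i) (s j)) - h (s i) (s i))"
    unfolding S_def by (subst sum_pairs) simp
  also have "\<dots> = (\<Sum>i<n. (real a * h (s i) Op1 + real b * h (s i) Op2 + real u * h (s i) Und) - h (s i) (s i))"
    using sum_state[of "h _" a b u] by (simp add: s_def c_def n_def)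
  also have "\<dots> = real a * ((real a * h Op1 Op1 + real b * h Op1 Op2 + real u * h Op1 Und) - h Op1 Op1)
      + real b * ((real a * h Op2 Op1 + real b * h Op2 Op2 + real u * h Op2 Und) - h Op2 Op2)
      + real u * ((real a * h Und Op1 + real b * h Und Op2 + real u * h Und Und) - h Und Und)"
    using sum_state[of "\<lambda>x. (real a * h x Op1 + real b * h x Op2 + real u * h x Und) - h x x" a b u]
    by (simp add: s_def c_def n_def)
  also have "\<dots> = Ef p g a b u"
  proof -
    have h11: "h Op1 Op1 = g (a-1+1,b,u)" "h Op1 Op2 = p * g (a-1+1,b,u) + (1-p) * g (a-1,b,u+1)"
      "h Op1 Und = g (a-1+1,b,u)" "h Op2 Op1 = g (a,b-1,u+1)" "h Op2 Op2 = g (a,b-1+1,u)"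
      "h Op2 Und = g (a,b-1+1,u)" "h Und Op1 = g (a+1,b,u-1)" "h Und Op2 = g (a,b+1,u-1)"
      "h Und Und = g (a,b,u-1+1)"
      using p by (simp_all add: h_def interact_def c_def move_simps del: One_nat_def; simp add: algebra_simps)+
    have e1: "real a * X (a-1+1,b,u) = real a * X (a,b,u)" for X :: "config \<Rightarrow> real"
      by (cases a) auto
    have e2: "real b * X (a,b-1+1,u) = real b * X (a,b,u)" for X :: "config \<Rightarrow> real"
      by (cases b) auto
    have e3: "real u * X (a,b,u-1+1) = real u * X (a,b,u)" for X :: "config \<Rightarrow> real"
      by (cases u) auto
    have "real a * ((real a * h Op1 Op1 + real b * h Op1 Op2 + real u * h Op1 Und) - h Op1 Op1)
       = real a * ((real a * g (a,b,u) + real b * (p * g (a,b,u) + (1-p) * g (a-1,b,u+1)) + real u * g (a,b,u)) - g (a,b,u))"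
      using e1[of g] unfolding h11 by (cases a) (auto simp: algebra_simps)
    moreover have "real b * ((real a * h Op2 Op1 + real b * h Op2 Op2 + real u * h Op2 Und) - h Op2 Op2)
       = real b * ((real a * g (a,b-1,u+1) + real b * g (a,b,u) + real u * g (a,b,u)) - g (a,b,u))"
      unfolding h11 by (cases b) (auto simp: algebra_simps)
    moreover have "real u * ((real a * h Und Op1 + real b * h Und Op2 + real u * h Und Und) - h Und Und)
       = real u * ((real a * g (a+1,b,u-1) + real b * g (a,b+1,u-1) + real u * g (a,b,u)) - g (a,b,u))"
      unfolding h11 by (cases u) (auto simp: algebra_simps)
    ultimately show ?thesis by (simp add: Ef_def algebra_simps)
  qed
  also have "real (card S) = real n * (real n - 1)"
  proof -
    have "real (card S) = (\<Sum>x\<in>S. (1::real))" by simp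
    also have "\<dots> = (\<Sum>i<n. (\<Sum>j<n. 1) - 1)" unfolding S_def by (subst sum_pairs) simp
    finally show ?thesis by (simp add: algebra_simps)
  qed
  finally show ?thesis by (simp add: c_def n_def)
qed


definition monoN :: "nat \<Rightarrow> (config \<Rightarrow> real) \<Rightarrow> bool" where
  "monoN n g \<longleftrightarrow> (\<forall>a b u a' b' u'. a+b+u = n \<longrightarrow> a'+b'+u' = n \<longrightarrow> a \<le> a' \<longrightarrow> b' \<le> b \<longrightarrow>
      g (a,b,u) \<le> g (a',b',u'))"

lemma monoD: "monoN n g \<Longrightarrow> a+b+u = n \<Longrightarrow> a'+b'+u' = n \<Longrightarrow> a \<le> a' \<Longrightarrow> b' \<le> b \<Longrightarrow>
   0 \<le> g (a',b',u') - g (a,b,u)"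
  unfolding monoN_def by force

lemma mnn: "0 \<le> (x::real) \<Longrightarrow> 0 \<le> y \<Longrightarrow> 0 \<le> x * y" by simp

lemma Ef_A:
  assumes m: "monoN (a+b+Suc v) g" and p: "0 \<le> p" "p \<le> 1"
  shows "Ef p g a b (Suc v) \<le> Ef p g (a+1) b v"
proof -
  let ?n = "a+b+Suc v"
  define R where "R = real a * (real a - 1) + real a * (real v + 1) + real b * (real b - 1)
     + real b * (real v + 1) + (real v + 1) * real v + real a * real b * p"
  have t1: "0 \<le> real a * real b * (1-p) * (g (a,b,v+1) - g (a-1,b,v+2))"
  proof (cases a)
    case (Suc a') then show ?thesis by (intro mnn monoD[OF m]) (use p in auto)
  qed simp
  have t2: "0 \<le> real a * real b * (g (a+1,b-1,v+1) - g (a,b-1,v+2))"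
  proof (cases b)
    case (Suc b') then show ?thesis by (intro mnn monoD[OF m]) (use Suc p in auto)
  qed simp
  have t3: "0 \<le> real v * real a * (g (a+2,b,v-1) - g (a+1,b,v))"
  proof (cases v)
    case (Suc v') then show ?thesis by (intro mnn monoD[OF m]) (use Suc p in auto)
  qed simp
  have t4: "0 \<le> real v * real b * (g (a+1,b+1,v-1) - g (a,b+1,v))"
  proof (cases v)
    case (Suc v') then show ?thesis by (intro mnn monoD[OF m]) (use Suc p in auto)
  qed simp
  have t5: "0 \<le> real b * (1-p) * (g (a,b,v+1) - g (a,b+1,v))"
    by (intro mnn monoD[OF m]) (use p in auto)
  have t6: "0 \<le> real b * p * (g (a+1,b,v) - g (a,b+1,v))"
    by (intro mnn monoD[OF m]) (use p in auto)
  have t7: "0 \<le> real v * (g (a+2,b,v-1) - g (a,b,v+1))"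
  proof (cases v)
    case (Suc v') then show ?thesis by (intro mnn monoD[OF m]) (use Suc p in auto)
  qed simp
  have t8: "0 \<le> real b * (g (a+1,b-1,v+1) - g (a,b,v+1))"
  proof (cases b)
    case (Suc b') then show ?thesis by (intro mnn monoD[OF m]) (use Suc p in auto)
  qed simp
  have Rn: "0 \<le> R - real v - real b"
  proof -
    have eqR: "R - real v - real b = real a * (real a - 1) + real a * real v + real a
       + real b * (real b - 1 + real v) + real v * real v + real a * real b * p"
      by (simp add: R_def algebra_simps)
    have "0 \<le> real a * (real a - 1)" by (cases a) auto
    moreover have "0 \<le> real b * (real b - 1 + real v)" by (cases b) auto
    ultimately show ?thesis unfolding eqR using p by (intro add_nonneg_nonneg) auto
  qed
  have t9: "0 \<le> (R - real v - real b) * (g (a+1,b,v) - g (a,b,v+1))"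
    by (intro mnn monoD[OF m]) (use Rn in auto)
  have eq: "Ef p g (a+1) b v - Ef p g a b (Suc v) =
      real a * real b * (1-p) * (g (a,b,v+1) - g (a-1,b,v+2))
    + real a * real b * (g (a+1,b-1,v+1) - g (a,b-1,v+2))
    + real v * real a * (g (a+2,b,v-1) - g (a+1,b,v))
    + real v * real b * (g (a+1,b+1,v-1) - g (a,b+1,v))
    + real b * (1-p) * (g (a,b,v+1) - g (a,b+1,v))
    + real b * p * (g (a+1,b,v) - g (a,b+1,v))
    + real v * (g (a+2,b,v-1) - g (a,b,v+1))
    + real b * (g (a+1,b-1,v+1) - g (a,b,v+1))
    + (R - real v - real b) * (g (a+1,b,v) - g (a,b,v+1))"
    by (simp add: Ef_def R_def algebra_simps numeral_2_eq_2)
  show ?thesis using eq t1 t2 t3 t4 t5 t6 t7 t8 t9 by linarith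
qed

lemma Ef_B:
  assumes m: "monoN (a+Suc w+u) g" and p: "0 \<le> p" "p \<le> 1"
  shows "Ef p g a (Suc w) u \<le> Ef p g a w (u+1)"
proof -
  define R where "R = real a * (real a - 1) + real a * (real u + 1) + real w * (real w - 1)
     + real w * (real u + 1) + (real u + 1) * real u + real a * real w * p"
  have t1: "0 \<le> real a * real w * (1-p) * (g (a-1,w,u+2) - g (a-1,w+1,u+1))"
  proof (cases a)
    case (Suc a') then show ?thesis by (intro mnn monoD[OF m]) (use Suc p in auto)
  qed simp
  have t2: "0 \<le> real a * real w * (g (a,w-1,u+2) - g (a,w,u+1))"
  proof (cases w)
    case (Suc b') then show ?thesis by (intro mnn monoD[OF m]) (use Suc p in auto)
  qed simp
  have t3: "0 \<le> real u * real a * (g (a+1,w,u) - g (a+1,w+1,u-1))"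
  proof (cases u)
    case (Suc v') then show ?thesis by (intro mnn monoD[OF m]) (use Suc p in auto)
  qed simp
  have t4: "0 \<le> real u * real w * (g (a,w+1,u) - g (a,w+2,u-1))"
  proof (cases u)
    case (Suc v') then show ?thesis by (intro mnn monoD[OF m]) (use Suc p in auto)
  qed simp
  have t5: "0 \<le> real a * (1-p) * (g (a,w+1,u) - g (a-1,w+1,u+1))"
  proof (cases a)
    case (Suc a') then show ?thesis by (intro mnn monoD[OF m]) (use Suc p in auto)
  qed simp
  have t6: "0 \<le> real u * (g (a,w+1,u) - g (a,w+2,u-1))"
  proof (cases u)
    case (Suc v') then show ?thesis by (intro mnn monoD[OF m]) (use Suc p in auto)
  qed simp
  have t7: "0 \<le> real a * (g (a+1,w,u) - g (a,w+1,u))"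
    by (intro mnn monoD[OF m]) (use p in auto)
  have Rn: "0 \<le> R - real a"
  proof -
    have eqR: "R - real a = real a * (real a - 1) + real a * real u
       + real w * (real w - 1) + real w * (real u + 1) + (real u + 1) * real u + real a * real w * p"
      by (simp add: R_def algebra_simps)
    have "0 \<le> real a * (real a - 1)" by (cases a) auto
    moreover have "0 \<le> real w * (real w - 1)" by (cases w) auto
    ultimately show ?thesis unfolding eqR using p by (intro add_nonneg_nonneg) auto
  qed
  have t8: "0 \<le> (R - real a) * (g (a,w,u+1) - g (a,w+1,u))"
    by (intro mnn monoD[OF m]) (use Rn in auto)
  have eq: "Ef p g a w (u+1) - Ef p g a (Suc w) u =
      real a * real w * (1-p) * (g (a-1,w,u+2) - g (a-1,w+1,u+1))
    + real a * real w * (g (a,w-1,u+2) - g (a,w,u+1))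
    + real u * real a * (g (a+1,w,u) - g (a+1,w+1,u-1))
    + real u * real w * (g (a,w+1,u) - g (a,w+2,u-1))
    + real a * (1-p) * (g (a,w+1,u) - g (a-1,w+1,u+1))
    + real u * (g (a,w+1,u) - g (a,w+2,u-1))
    + real a * (g (a+1,w,u) - g (a,w+1,u))
    + (R - real a) * (g (a,w,u+1) - g (a,w+1,u))"
    by (simp add: Ef_def R_def algebra_simps numeral_2_eq_2)
  show ?thesis using eq t1 t2 t3 t4 t5 t6 t7 t8 by linarith
qed


lemma Ef_p:
  assumes m: "monoN (a+b+u) g" and p: "0 \<le> q" "q \<le> p"
  shows "Ef q g a b u \<le> Ef p g a b u"
proof -
  have eq: "Ef p g a b u - Ef q g a b u = real a * real b * (p - q) * (g (a,b,u) - g (a-1,b,u+1))"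
    by (simp add: Ef_def algebra_simps)
  have "0 \<le> real a * real b * (p - q) * (g (a,b,u) - g (a-1,b,u+1))"
  proof (cases a)
    case (Suc a') then show ?thesis by (intro mnn monoD[OF m]) (use Suc p in auto)
  qed simp
  then show ?thesis using eq by linarith
qed

lemma Ef_pw:
  assumes h: "\<And>x y z. x+y+z = a+b+u \<Longrightarrow> g' (x,y,z) \<le> g (x,y,z)" and p: "0 \<le> p" "p \<le> 1"
  shows "Ef p g' a b u \<le> Ef p g a b u"
proof -
  have eq: "Ef p g a b u - Ef p g' a b u =
      (real a * (real a - 1) + real a * real b * p + real a * real u + real b * (real b - 1)
        + real b * real u + real u * (real u - 1)) * (g (a,b,u) - g' (a,b,u))
    + real a * real b * (1 - p) * (g (a-1,b,u+1) - g' (a-1,b,u+1))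
    + real b * real a * (g (a,b-1,u+1) - g' (a,b-1,u+1))
    + real u * real a * (g (a+1,b,u-1) - g' (a+1,b,u-1))
    + real u * real b * (g (a,b+1,u-1) - g' (a,b+1,u-1))"
    by (simp add: Ef_def algebra_simps)
  have c0: "0 \<le> real a * (real a - 1)" by (cases a) auto
  have c1: "0 \<le> real b * (real b - 1)" by (cases b) auto
  have c2: "0 \<le> real u * (real u - 1)" by (cases u) auto
  have t0: "0 \<le> (real a * (real a - 1) + real a * real b * p + real a * real u + real b * (real b - 1)
        + real b * real u + real u * (real u - 1)) * (g (a,b,u) - g' (a,b,u))"
  proof (rule mnn)
    have "0 \<le> real a * real b * p" "0 \<le> real a * real u" "0 \<le> real b * real u" using p by auto
    then show "0 \<le> real a * (real a - 1) + real a * real b * p + real a * real u + real b * (real b - 1)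
        + real b * real u + real u * (real u - 1)" using c0 c1 c2 by linarith
    show "0 \<le> g (a,b,u) - g' (a,b,u)" using h[of a b u] by simp
  qed
  have t1: "0 \<le> real a * real b * (1 - p) * (g (a-1,b,u+1) - g' (a-1,b,u+1))"
  proof (cases a)
    case (Suc a') then show ?thesis using p h[of "a-1" b "u+1"] by (intro mnn) auto
  qed simp
  have t2: "0 \<le> real b * real a * (g (a,b-1,u+1) - g' (a,b-1,u+1))"
  proof (cases b)
    case (Suc a') then show ?thesis using p h[of a "b-1" "u+1"] by (intro mnn) auto
  qed simp
  have t3: "0 \<le> real u * real a * (g (a+1,b,u-1) - g' (a+1,b,u-1))"
  proof (cases u)
    case (Suc a') then show ?thesis using p h[of "a+1" b "u-1"] by (intro mnn) auto
  qed simp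
  have t4: "0 \<le> real u * real b * (g (a,b+1,u-1) - g' (a,b+1,u-1))"
  proof (cases u)
    case (Suc a') then show ?thesis using p h[of a "b+1" "u-1"] by (intro mnn) auto
  qed simp
  show ?thesis using eq t0 t1 t2 t3 t4 by linarith
qed

lemma step_small: "a+b+u < 2 \<Longrightarrow> step p (a,b,u) = return_pmf (a,b,u)"
  by (simp add: step_def nagents_def)

lemma div_mono': "x \<le> y \<Longrightarrow> (2::nat) \<le> n \<Longrightarrow> x / (real n * (real n - 1)) \<le> y / (real n * (real n - 1))"
proof -
  assume "x \<le> y" "2 \<le> n"
  then have "0 < real n * (real n - 1)" by (simp add: mult_pos_pos)
  then show ?thesis using \<open>x \<le> y\<close> by (simp add: divide_right_mono)
qed

lemma Phi_pw:
  fixes g g' :: "config \<Rightarrow> real"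
  assumes h: "\<And>x y z. x+y+z = a+b+u \<Longrightarrow> g' (x,y,z) \<le> g (x,y,z)" and p: "0 \<le> p" "p \<le> 1"
  shows "(\<integral>y. g' y \<partial>step p (a,b,u)) \<le> (\<integral>y. g y \<partial>step p (a,b,u))"
proof (cases "a+b+u < 2")
  case True then show ?thesis unfolding step_small[OF True] expectation_return_pmf using h[of a b u] by simp
next
  case False
  then have n2: "2 \<le> a+b+u" by simp
  show ?thesis unfolding step_formula[OF n2 p] by (rule div_mono'[OF Ef_pw[of a b u g' g, OF h p] n2])
qed

lemma Phi_p:
  assumes m: "monoN (a+b+u) g" and p: "0 \<le> q" "q \<le> p" "p \<le> 1"
  shows "(\<integral>y. g y \<partial>step q (a,b,u)) \<le> (\<integral>y. g y \<partial>step p (a,b,u))"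
proof (cases "a+b+u < 2")
  case True then show ?thesis by (simp add: step_small)
next
  case False
  then have n2: "2 \<le> a+b+u" by simp
  show ?thesis unfolding step_formula[OF n2 p(1) order.trans[OF p(2,3)]] step_formula[OF n2 order.trans[OF p(1,2)] p(3)]
    by (rule div_mono'[OF Ef_p[OF m p(1,2)] n2])
qed

lemma Phi_A:
  assumes m: "monoN (a+b+Suc v) g" and p: "0 \<le> p" "p \<le> 1"
  shows "(\<integral>y. g y \<partial>step p (a,b,Suc v)) \<le> (\<integral>y. g y \<partial>step p (a+1,b,v))"
proof (cases "a+b+Suc v < 2")
  case True
  then have "a = 0" "b = 0" "v = 0" by auto
  then show ?thesis using monoD[OF m, of 0 0 1 1 0 0] by (simp add: step_small)
next
  case False
  then have n2: "2 \<le> a+b+Suc v" by linarith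
  have e2: "(\<integral>y. g y \<partial>step p (a+1,b,v)) = Ef p g (a+1) b v / (real (a+b+Suc v) * (real (a+b+Suc v) - 1))"
  proof -
    have n2': "2 \<le> a+1+b+v" using n2 by simp
    show ?thesis using step_formula[OF n2' p, of g] by (simp add: algebra_simps)
  qed
  show ?thesis unfolding step_formula[OF n2 p] e2 by (rule div_mono'[OF Ef_A[OF m p] n2])
qed

lemma Phi_B:
  assumes m: "monoN (a+Suc w+u) g" and p: "0 \<le> p" "p \<le> 1"
  shows "(\<integral>y. g y \<partial>step p (a,Suc w,u)) \<le> (\<integral>y. g y \<partial>step p (a,w,u+1))"
proof (cases "a+Suc w+u < 2")
  case True
  then have "a = 0" "w = 0" "u = 0" by auto
  then show ?thesis using monoD[OF m, of 0 1 0 0 0 1] by (simp add: step_small)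
next
  case False
  then have n2: "2 \<le> a+Suc w+u" by linarith
  have e2: "(\<integral>y. g y \<partial>step p (a,w,u+1)) = Ef p g a w (u+1) / (real (a+Suc w+u) * (real (a+Suc w+u) - 1))"
  proof -
    have n2': "2 \<le> a+w+(u+1)" using n2 by simp
    show ?thesis using step_formula[OF n2' p, of g] by (simp add: algebra_simps)
  qed
  show ?thesis unfolding step_formula[OF n2 p] e2 by (rule div_mono'[OF Ef_B[OF m p] n2])
qed

lemma chainB:
  assumes m: "monoN (a+b+k+u) g" and p: "0 \<le> p" "p \<le> 1"
  shows "(\<integral>y. g y \<partial>step p (a,b+k,u)) \<le> (\<integral>y. g y \<partial>step p (a,b,u+k))"
  using m
proof (induction k arbitrary: u)
  case 0 then show ?case by simp
next
  case (Suc k)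
  have "(\<integral>y. g y \<partial>step p (a,Suc (b+k),u)) \<le> (\<integral>y. g y \<partial>step p (a,b+k,u+1))"
    by (rule Phi_B) (use Suc.prems p in \<open>simp_all add: algebra_simps\<close>)
  also have "\<dots> \<le> (\<integral>y. g y \<partial>step p (a,b,u+1+k))"
    by (rule Suc.IH) (use Suc.prems in \<open>simp add: algebra_simps\<close>)
  finally show ?case by (simp add: algebra_simps)
qed

lemma chainA:
  assumes m: "monoN (a+b+k+u) g" and p: "0 \<le> p" "p \<le> 1"
  shows "(\<integral>y. g y \<partial>step p (a,b,u+k)) \<le> (\<integral>y. g y \<partial>step p (a+k,b,u))"
  using m
proof (induction k arbitrary: a)
  case 0 then show ?case by simp
next
  case (Suc k)
  have "(\<integral>y. g y \<partial>step p (a,b,Suc (u+k))) \<le> (\<integral>y. g y \<partial>step p (a+1,b,u+k))"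
    by (rule Phi_A) (use Suc.prems p in \<open>simp_all add: algebra_simps\<close>)
  also have "\<dots> \<le> (\<integral>y. g y \<partial>step p (a+1+k,b,u))"
    by (rule Suc.IH) (use Suc.prems in \<open>simp add: algebra_simps\<close>)
  finally show ?case by (simp add: algebra_simps)
qed

lemma Phi_mono:
  assumes m: "monoN n g" and p: "0 \<le> p" "p \<le> 1"
    and "a'+b'+u' = n" "a+b+u = n" "a' \<le> a" "b \<le> b'"
  shows "(\<integral>y. g y \<partial>step p (a',b',u')) \<le> (\<integral>y. g y \<partial>step p (a,b,u))"
proof -
  define k1 where "k1 = b' - b"
  define k2 where "k2 = a - a'"
  have "(\<integral>y. g y \<partial>step p (a',b+k1,u')) \<le> (\<integral>y. g y \<partial>step p (a',b,u'+k1))"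
  proof (rule chainB)
    have "a'+b+k1+u' = n" using assms by (simp add: k1_def)
    then show "monoN (a'+b+k1+u') g" using m by simp
  qed (use p in auto)
  also have "u'+k1 = u + k2" using assms by (simp add: k1_def k2_def)
  also have "(\<integral>y. g y \<partial>step p (a',b,u+k2)) \<le> (\<integral>y. g y \<partial>step p (a'+k2,b,u))"
  proof (rule chainA)
    have "a'+b+k2+u = n" using assms by (simp add: k2_def)
    then show "monoN (a'+b+k2+u) g" using m by simp
  qed (use p in auto)
  finally show ?thesis using assms by (simp add: k1_def k2_def)
qed


lemma P_le1: "P i p n c t \<le> 1" by (simp add: P_def)
lemma P_ge0: "0 \<le> P i p n c t" by (simp add: P_def)

lemma P1_mono:
  assumes "0 \<le> q" "q \<le> p" "p \<le> 1" "a'+b'+u' = n" "a+b+u = n" "a' \<le> a" "b \<le> b'"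
  shows "P 1 q n (a',b',u') t \<le> P 1 p n (a,b,u) t"
  using assms
proof (induction t arbitrary: q p a b u a' b' u')
  case 0
  show ?case
  proof (cases "(a',b',u') = consensus 1 n")
    case True
    then have "(a,b,u) = consensus 1 n" using 0 by (auto simp: consensus_def)
    then show ?thesis by (simp add: P_0)
  next
    case False then show ?thesis by (simp add: P_0)
  qed
next
  case (Suc t)
  show ?case
  proof (cases "(a,b,u) = consensus 1 n")
    case True
    then show ?thesis using P_le1[of 1 q n "(a',b',u')" "Suc t"] by (simp add: P_Suc)
  next
    case False
    then have F': "(a',b',u') \<noteq> consensus 1 n" using Suc.prems by (auto simp: consensus_def)
    have m: "monoN n (\<lambda>y. P 1 p n y t)"
      unfolding monoN_def using Suc.IH Suc.prems by auto
    have "(\<integral>y. P 1 q n y t \<partial>step q (a',b',u')) \<le> (\<integral>y. P 1 p n y t \<partial>step q (a',b',u'))"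
      by (rule Phi_pw) (use Suc.IH Suc.prems in auto)
    also have "\<dots> \<le> (\<integral>y. P 1 p n y t \<partial>step p (a',b',u'))"
      by (rule Phi_p) (use Suc.prems m in auto)
    also have "\<dots> \<le> (\<integral>y. P 1 p n y t \<partial>step p (a,b,u))"
      by (rule Phi_mono[OF m]) (use Suc.prems in auto)
    finally show ?thesis using False F' by (simp add: P_Suc)
  qed
qed

lemma P2_mono:
  assumes "0 \<le> p" "p \<le> q" "q \<le> 1" "a'+b'+u' = n" "a+b+u = n" "a \<le> a'" "b' \<le> b"
  shows "P 2 q n (a',b',u') t \<le> P 2 p n (a,b,u) t"
  using assms
proof (induction t arbitrary: q p a b u a' b' u')
  case 0
  show ?case
  proof (cases "(a',b',u') = consensus 2 n")
    case True
    then have "(a,b,u) = consensus 2 n" using 0 by (auto simp: consensus_def)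
    then show ?thesis by (simp add: P_0)
  next
    case False then show ?thesis by (simp add: P_0)
  qed
next
  case (Suc t)
  show ?case
  proof (cases "(a,b,u) = consensus 2 n")
    case True
    then show ?thesis using P_le1[of 2 q n "(a',b',u')" "Suc t"] by (simp add: P_Suc)
  next
    case False
    then have F': "(a',b',u') \<noteq> consensus 2 n" using Suc.prems by (auto simp: consensus_def)
    have m: "monoN n (\<lambda>y. - P 2 q n y t)"
      unfolding monoN_def using Suc.IH Suc.prems by auto
    have "(\<integral>y. - P 2 p n y t \<partial>step p (a,b,u)) \<le> (\<integral>y. - P 2 q n y t \<partial>step p (a,b,u))"
      by (rule Phi_pw) (use Suc.IH Suc.prems in auto)
    also have "\<dots> \<le> (\<integral>y. - P 2 q n y t \<partial>step q (a,b,u))"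
      by (rule Phi_p) (use Suc.prems m in auto)
    also have "\<dots> \<le> (\<integral>y. - P 2 q n y t \<partial>step q (a',b',u'))"
      by (rule Phi_mono[OF m]) (use Suc.prems in auto)
    finally show ?thesis using False F' by (simp add: P_Suc)
  qed
qed

theorem theorem2:
  fixes p pt :: real and n x1 x2 u xt1 xt2 ut t :: nat
  assumes "0 \<le> p" "p \<le> 1" "0 \<le> pt" "pt \<le> 1"
    and "x1 + x2 + u = n" and "xt1 + xt2 + ut = n"
  shows "(pt \<le> p \<and> xt1 \<le> x1 \<and> xt2 \<ge> x2 \<longrightarrow>
            prob_T_le 1 p (x1, x2, u) t \<ge> prob_T_le 1 pt (xt1, xt2, ut) t)
       \<and> (pt \<ge> p \<and> xt1 \<ge> x1 \<and> xt2 \<le> x2 \<longrightarrow>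
            prob_T_le 2 p (x1, x2, u) t \<ge> prob_T_le 2 pt (xt1, xt2, ut) t)"
proof -
  have e: "prob_T_le i q (a,b,c) t = P i q (a+b+c) (a,b,c) t" for i q a b c
    by (simp add: prob_T_le_def P_def nagents_def)
  show ?thesis unfolding e using assms P1_mono[of pt p xt1 xt2 ut n x1 x2 u t]
      P2_mono[of p pt xt1 xt2 ut n x1 x2 u t] by auto
qed

end
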